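(* Suppose (P1), (P2), (P4), (A1), (A2), (A3b), (A4b) hold (same $\alpha$), and let $F_{\lim}$ be the almost-sure limit of $F(\theta_k)$. Then $\sup_{k\ge0}\mathbb{E}[F(\theta_k)]<\infty$, and for every $\gamma\in[0,1)$, $$\lim_{k\to\infty}\mathbb{E}\big[|(F(\theta_k)-F_{l.b.})^\gamma-(F_{\lim}-F_{l.b.})^\gamma|\big]=0.$$
   Context: Setting: $X$ is a random variable taking values in a measurable space $\mathcal{X}$; $f:\mathbb{R}^p\times\mathcal{X}\to\mathbb{R}$ is such that $f(\cdot,x)$ is differentiable for every $x$, with gradient in the first argument denoted $\dot f(\theta,x)$ (measurable in $x$); $F(\theta)=\mathbb{E}[f(\theta,X)]$ is finite and differentiable with gradient $\dot F(\theta)$. SGD: $\theta_0\in\mathbb{R}^p$ is fixed (deterministic), $X_1,X_2,\dots$ are i.i.d. copies of $X$, $M_0,M_1,\dots$ are deterministic $p\times p$ matrices, and $\theta_{k+1}=\theta_k - M_k\dot f(\theta_k,X_{k+1})$ for $k\ge 0$. $\lambda_{\max}(\cdot)$ denotes the largest eigenvalue of a symmetric matrix. Under these hypotheses $F(\theta_k)$ converges almost surely to an integrable random variable $F_{\lim}$. (P1) Every $M_k$ is symmetric positive definite. (P2) For some $\alpha\in(0,1]$, $S:=\sum_{k=1}^\infty \lambda_{\max}(M_k)^{1+\alpha}<\infty$. (P4) $\lim_{k\to\infty}\lambda_{\max}(M_k)^\alpha\kappa(M_k)=0$, where $\kappa(M)=\|M\|_2\|M^{-1}\|_2$. (A1)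 There is $F_{l.b.}\in\mathbb{R}$ with $F(\theta)\ge F_{l.b.}$ for all $\theta$. (A2) $\mathbb{E}[\dot f(\theta,X)]=\dot F(\theta)$ for all $\theta$. (A3b) There are $C_1,C_2\ge0$, $C_3\ge1$ with $\mathbb{E}[\|\dot f(\theta,X)\|_2^2]\le C_1+C_2(F(\theta)-F_{l.b.})+C_3\|\dot F(\theta)\|_2^2$ for all $\theta$. (A4b) $\dot F$ is globally $\alpha$-Hölder continuous: there is $L>0$ with $\|\dot F(\varphi_1)-\dot F(\varphi_2)\|_2\le L\|\varphi_1-\varphi_2\|_2^\alpha$ for all $\varphi_1,\varphi_2\in\mathbb{R}^p$. *)

theory Defs
  imports "HOL-Probability.Probability"
begin

definition lambda_max :: "real^'n^'n \<Rightarrow> real" where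
  "lambda_max A = Max {c. \<exists>v::real^'n. v \<noteq> 0 \<and> A *v v = c *\<^sub>R v}"

definition mat_norm2 :: "real^'n^'n \<Rightarrow> real" where
  "mat_norm2 A = onorm (\<lambda>x. A *v x)"

definition cond_num :: "real^'n^'n \<Rightarrow> real" where
  "cond_num A = mat_norm2 A * mat_norm2 (matrix_inv A)"

text \<open>Real power x^g for x \<ge> 0 and g \<ge> 0 with the usual convention x^0 = 1
  (Isabelle's powr has 0 powr 0 = 0, hence the case split).\<close>
definition rpow :: "real \<Rightarrow> real \<Rightarrow> real" where
  "rpow x g = (if g = 0 then 1 else x powr g)"

end

theory Submission
  imports Defs
begin

lemma sym_inner:
  fixes A :: "real^'n^'n"
  assumes "transpose A = A" shows "(A *v x) \<bullet> y = x \<bullet> (A *v y)"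
proof -
  have "(A *v x) = x v* transpose A" by simp
  then show ?thesis using dot_lmul_matrix[of x "transpose A" y] assms by simp
qed

lemma eig_finite:
  fixes A :: "real^'n^'n"
  assumes sym: "transpose A = A"
  shows "finite {c. \<exists>v::real^'n. v \<noteq> 0 \<and> A *v v = c *\<^sub>R v}"
proof -
  define E where "E = {c. \<exists>v::real^'n. v \<noteq> 0 \<and> A *v v = c *\<^sub>R v}"
  define V where "V c = (SOME v::real^'n. v \<noteq> 0 \<and> A *v v = c *\<^sub>R v)" for c
  have V: "V c \<noteq> 0 \<and> A *v V c = c *\<^sub>R V c" if "c \<in> E" for c
  proof -
    have "\<exists>v::real^'n. v \<noteq> 0 \<and> A *v v = c *\<^sub>R v" using that unfolding E_def by simp
    then show ?thesis unfolding V_def by (rule someI_ex)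
  qed
  have inj: "inj_on V E"
  proof (rule inj_onI)
    fix c d assume "c \<in> E" "d \<in> E" "V c = V d"
    have "c *\<^sub>R V c = d *\<^sub>R V c" using V[OF \<open>c \<in> E\<close>] V[OF \<open>d \<in> E\<close>] \<open>V c = V d\<close> by metis
    moreover have "V c \<noteq> 0" using V[OF \<open>c \<in> E\<close>] by blast
    ultimately show "c = d" by (metis scaleR_right_imp_eq)
  qed
  have orth: "pairwise orthogonal (V ` E)"
  proof (clarsimp simp: pairwise_def orthogonal_def)
    fix c d assume c: "c \<in> E" and d: "d \<in> E" and ne: "V c \<noteq> V d"
    then have cd: "c \<noteq> d" by auto
    have "(A *v V c) \<bullet> V d = V c \<bullet> (A *v V d)" by (rule sym_inner[OF sym])
    then have "c * (V c \<bullet> V d) = d * (V c \<bullet> V d)" using V[OF c] V[OF d] by simp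
    then show "V c \<bullet> V d = 0" using cd by simp
  qed
  have "0 \<notin> V ` E" using V by auto
  then have "independent (V ` E)" using orth pairwise_orthogonal_independent by blast
  then have "finite (V ` E)" by (rule finiteI_independent)
  then have "finite E" using inj by (simp add: finite_image_iff)
  then show ?thesis unfolding E_def .
qed

lemma lambda_max_ge:
  fixes A :: "real^'n^'n"
  assumes sym: "transpose A = A" and "v \<noteq> 0" "A *v v = c *\<^sub>R v"
  shows "c \<le> lambda_max A"
  unfolding lambda_max_def using assms eig_finite[OF sym] by (intro Max_ge) auto

lemma quad_aux:
  fixes a c :: real
  assumes "\<And>t. t > 0 \<Longrightarrow> 2 * t * a + t^2 * c \<le> 0"
  shows "a \<le> 0"
proof (rule ccontr)
  assume "\<not> a \<le> 0"
  then have a: "a > 0" by simp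
  define t where "t = a / (\<bar>c\<bar> + 1)"
  have t: "t > 0" using a by (simp add: t_def)
  have "t * (\<bar>c\<bar> + 1) = a" unfolding t_def by simp
  then have "t * \<bar>c\<bar> < 2 * a" using t a by (simp add: algebra_simps)
  then have "t^2 * \<bar>c\<bar> < 2 * t * a" using t by (simp add: power2_eq_square mult.assoc mult_strict_left_mono)
  moreover have "- (t^2 * \<bar>c\<bar>) \<le> t^2 * c" using mult_left_mono[of "-\<bar>c\<bar>" c "t^2"] by simp
  ultimately have "2 * t * a + t^2 * c > 0" by linarith
  with assms[OF t] show False by simp
qed

lemma norm_bound_lmax:
  fixes A :: "real^'n^'n"
  assumes sym: "transpose A = A" and pd: "\<And>v. v \<noteq> 0 \<Longrightarrow> v \<bullet> (A *v v) > 0"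
  shows "0 < lambda_max A \<and> (\<forall>v. norm (A *v v) \<le> lambda_max A * norm v)"
proof -
  have cont: "continuous_on (sphere (0::real^'n) 1) (\<lambda>w. norm (A *v w))"
    by (intro continuous_on_norm linear_continuous_on matrix_vector_mul_bounded_linear)
  have ne: "sphere (0::real^'n) 1 \<noteq> {}" by simp
  obtain u where u: "u \<in> sphere 0 1" and umax: "\<And>w. w \<in> sphere 0 1 \<Longrightarrow> norm (A *v w) \<le> norm (A *v u)"
    using continuous_attains_sup[OF compact_sphere ne cont] by blast
  define r where "r = norm (A *v u)"
  have nu: "norm u = 1" using u by simp
  have bnd: "norm (A *v w) \<le> r * norm w" for w
  proof (cases "w = 0")
    case True then show ?thesis by simp
  next
    case False
    then have "(1 / norm w) *\<^sub>R w \<in> sphere 0 1" by simp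
    then have "norm (A *v ((1 / norm w) *\<^sub>R w)) \<le> r" using umax r_def by blast
    then have "(1 / norm w) * norm (A *v w) \<le> r" by (simp add: matrix_vector_mult_scaleR)
    then show ?thesis using False by (simp add: field_simps)
  qed
  have u0: "u \<noteq> 0" using nu by auto
  have r0: "r > 0"
  proof -
    have "u \<bullet> (A *v u) > 0" using pd u0 by blast
    then have "A *v u \<noteq> 0" by auto
    then show ?thesis unfolding r_def by simp
  qed
  define h where "h = A *v (A *v u) - r^2 *\<^sub>R u"
  have key: "2 * t * (h \<bullet> h) + t^2 * ((A *v h) \<bullet> (A *v h) - r^2 * (h \<bullet> h)) \<le> 0" if "t > 0" for t
  proof -
    have "norm (A *v (u + t *\<^sub>R h)) \<le> r * norm (u + t *\<^sub>R h)" by (rule bnd)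
    then have "(norm (A *v (u + t *\<^sub>R h)))^2 \<le> (r * norm (u + t *\<^sub>R h))^2"
      by (simp add: power_mono)
    then have *: "(A *v u + t *\<^sub>R (A *v h)) \<bullet> (A *v u + t *\<^sub>R (A *v h)) \<le> r^2 * ((u + t *\<^sub>R h) \<bullet> (u + t *\<^sub>R h))"
      by (simp add: power2_norm_eq_inner power_mult_distrib matrix_vector_right_distrib matrix_vector_mult_scaleR)
    have uu: "u \<bullet> u = 1" using nu by (simp add: power2_norm_eq_inner[symmetric])
    have Au: "(A *v u) \<bullet> (A *v u) = r^2" unfolding r_def by (simp add: power2_norm_eq_inner)
    have Ah: "(A *v u) \<bullet> (A *v h) = (A *v (A *v u)) \<bullet> h" using sym_inner[OF sym, of "A *v u" h] by simp
    have hh: "h \<bullet> h = (A *v (A *v u)) \<bullet> h - r^2 * (u \<bullet> h)" unfolding h_def 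
      by (simp add: inner_diff_left)
    have hh': "h \<bullet> (A *v (A *v u)) = h \<bullet> h + r^2 * (h \<bullet> u)" using hh by (simp add: inner_commute)
    have "(A *v u + t *\<^sub>R (A *v h)) \<bullet> (A *v u + t *\<^sub>R (A *v h)) = r^2 + 2 * t * (h \<bullet> h + r^2 * (h \<bullet> u)) + t^2 * ((A *v h) \<bullet> (A *v h))"
      using Au Ah hh' by (simp add: inner_add_left inner_add_right power2_eq_square algebra_simps inner_commute)
    moreover have "(u + t *\<^sub>R h) \<bullet> (u + t *\<^sub>R h) = 1 + 2 * t * (h \<bullet> u) + t^2 * (h \<bullet> h)"
      using uu by (simp add: inner_add_left inner_add_right power2_eq_square algebra_simps inner_commute)
    ultimately have "r^2 + 2 * t * (h \<bullet> h + r^2 * (h \<bullet> u)) + t^2 * ((A *v h) \<bullet> (A *v h)) \<le> r^2 * (1 + 2 * t * (h \<bullet> u) + t^2 * (h \<bullet> h))"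
      using * by simp
    then show ?thesis by (simp add: algebra_simps)
  qed
  have "h \<bullet> h \<le> 0" using quad_aux[of "h \<bullet> h"] key by blast
  then have h0: "h = 0" by (metis antisym inner_eq_zero_iff inner_ge_zero)
  define w where "w = A *v u + r *\<^sub>R u"
  have Aw: "A *v w = r *\<^sub>R w"
  proof -
    have "A *v (A *v u) = r^2 *\<^sub>R u" using h0 unfolding h_def by simp
    then show ?thesis unfolding w_def
      by (simp add: matrix_vector_right_distrib matrix_vector_mult_scaleR power2_eq_square scaleR_add_right)
  qed
  have w0: "w \<noteq> 0"
  proof
    assume "w = 0"
    then have "A *v u = - r *\<^sub>R u" unfolding w_def by (simp add: eq_neg_iff_add_eq_0)
    moreover have "u \<bullet> u = 1" using nu by (simp add: power2_norm_eq_inner[symmetric])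
    ultimately have "u \<bullet> (A *v u) = - r" by simp
    moreover have "u \<bullet> (A *v u) > 0" using pd u0 by blast
    ultimately show False using r0 by simp
  qed
  have rl: "r \<le> lambda_max A" by (rule lambda_max_ge[OF sym w0 Aw])
  show ?thesis
  proof (intro conjI allI)
    show "0 < lambda_max A" using r0 rl by simp
    fix v show "norm (A *v v) \<le> lambda_max A * norm v"
      using bnd[of v] rl by (meson mult_right_mono norm_ge_zero order_trans)
  qed
qed

lemma descent:
  fixes F :: "real^'n \<Rightarrow> real" and Fdot :: "real^'n \<Rightarrow> real^'n"
  assumes F_diff: "\<And>\<theta>. (F has_derivative (\<lambda>h. Fdot \<theta> \<bullet> h)) (at \<theta>)"
    and A4b: "\<And>\<phi>1 \<phi>2. norm (Fdot \<phi>1 - Fdot \<phi>2) \<le> L * norm (\<phi>1 - \<phi>2) powr \<alpha>"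
    and alpha: "0 < \<alpha>" and L: "L > 0"
  shows "F y \<le> F x + Fdot x \<bullet> (y - x) + L * norm (y - x) powr (1 + \<alpha>)"
proof -
  define d where "d = y - x"
  define \<phi> where "\<phi> t = F (x + t *\<^sub>R d)" for t :: real
  have der: "DERIV \<phi> t :> Fdot (x + t *\<^sub>R d) \<bullet> d" for t
  proof -
    have l: "((\<lambda>t::real. x + t *\<^sub>R d) has_derivative (\<lambda>h. h *\<^sub>R d)) (at t)"
      by (auto intro!: derivative_eq_intros)
    have "((\<lambda>t. F (x + t *\<^sub>R d)) has_derivative (\<lambda>h. Fdot (x + t *\<^sub>R d) \<bullet> (h *\<^sub>R d))) (at t)"
      using has_derivative_compose[OF l F_diff] by simp
    moreover have "(\<lambda>h. Fdot (x + t *\<^sub>R d) \<bullet> (h *\<^sub>R d)) = (*) (Fdot (x + t *\<^sub>R d) \<bullet> d)"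
      by (auto simp: fun_eq_iff)
    ultimately show ?thesis unfolding \<phi>_def has_field_derivative_def by simp
  qed
  obtain z where z: "0 < z" "z < 1" "\<phi> 1 - \<phi> 0 = (1 - 0) * (Fdot (x + z *\<^sub>R d) \<bullet> d)"
    using MVT2[of 0 1 \<phi> "\<lambda>t. Fdot (x + t *\<^sub>R d) \<bullet> d"] der by auto
  have Fy: "F y - F x = Fdot (x + z *\<^sub>R d) \<bullet> d" using z(3) unfolding \<phi>_def d_def by simp
  have "(Fdot (x + z *\<^sub>R d) - Fdot x) \<bullet> d \<le> norm (Fdot (x + z *\<^sub>R d) - Fdot x) * norm d"
    by (rule norm_cauchy_schwarz)
  also have "\<dots> \<le> L * norm (z *\<^sub>R d) powr \<alpha> * norm d"
    using A4b[of "x + z *\<^sub>R d" x] by (simp add: mult_right_mono)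
  also have "\<dots> \<le> L * norm d powr \<alpha> * norm d"
  proof -
    have "norm (z *\<^sub>R d) \<le> norm d" using z by (simp add: mult_left_le_one_le)
    then have "norm (z *\<^sub>R d) powr \<alpha> \<le> norm d powr \<alpha>" using alpha by (simp add: powr_mono2)
    then show ?thesis using L by (simp add: mult_right_mono)
  qed
  also have "\<dots> = L * norm d powr (1 + \<alpha>)"
    by (simp add: powr_add)
  finally show ?thesis using Fy unfolding d_def by (simp add: inner_diff_left)
qed

lemma grad_dom:
  fixes F :: "real^'n \<Rightarrow> real" and Fdot :: "real^'n \<Rightarrow> real^'n"
  assumes F_diff: "\<And>\<theta>. (F has_derivative (\<lambda>h. Fdot \<theta> \<bullet> h)) (at \<theta>)"
    and A4b: "\<And>\<phi>1 \<phi>2. norm (Fdot \<phi>1 - Fdot \<phi>2) \<le> L * norm (\<phi>1 - \<phi>2) powr \<alpha>"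
    and alpha: "0 < \<alpha>" "\<alpha> \<le> 1" and L: "L > 0" and A1: "\<And>\<theta>. F \<theta> \<ge> Flb"
  shows "(norm (Fdot \<theta>))^2 \<le> 1 + (2 * (2*L) powr (1/\<alpha>)) * (F \<theta> - Flb)"
proof (cases "norm (Fdot \<theta>) \<le> 1")
  case True
  then have "(norm (Fdot \<theta>))^2 \<le> 1" by (simp add: power_le_one)
  moreover have "0 \<le> (2 * (2*L) powr (1/\<alpha>)) * (F \<theta> - Flb)" using A1[of \<theta>] by simp
  ultimately show ?thesis by linarith
next
  case False
  define g where "g = Fdot \<theta>"
  define d where "d = norm g"
  have d1: "d > 1" using False unfolding d_def g_def by simp
  define s where "s = (2*L) powr (-1/\<alpha>)"
  have s0: "s > 0" unfolding s_def using L by simp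
  have Ls: "L * s powr \<alpha> = 1/2"
  proof -
    have "s powr \<alpha> = (2*L) powr (-1)" unfolding s_def using alpha L by (simp add: powr_powr)
    then show ?thesis using L by (simp add: powr_minus_divide)
  qed
  have desc: "F (\<theta> - s *\<^sub>R g) \<le> F \<theta> + g \<bullet> (- (s *\<^sub>R g)) + L * norm (- (s *\<^sub>R g)) powr (1 + \<alpha>)"
    using descent[OF F_diff A4b alpha(1) L, of "\<theta> - s *\<^sub>R g" \<theta>] unfolding g_def by simp
  have gg: "g \<bullet> (- (s *\<^sub>R g)) = - s * d^2" unfolding d_def by (simp add: power2_norm_eq_inner)
  have pw: "norm (- (s *\<^sub>R g)) powr (1 + \<alpha>) \<le> s * s powr \<alpha> * d^2"
  proof -
    have "norm (- (s *\<^sub>R g)) = s * d" using s0 unfolding d_def by simp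
    then have "norm (- (s *\<^sub>R g)) powr (1 + \<alpha>) = s powr (1 + \<alpha>) * d powr (1 + \<alpha>)"
      using s0 d1 by (simp add: powr_mult)
    also have "d powr (1 + \<alpha>) \<le> d powr 2" using d1 alpha by (intro powr_mono) auto
    also have "d powr 2 = d^2" using d1 by (simp add: powr_numeral)
    also have "s powr (1 + \<alpha>) = s * s powr \<alpha>" using s0 by (simp add: powr_add)
    finally show ?thesis using s0 by (simp add: mult_left_mono)
  qed
  have "Flb \<le> F \<theta> - s * d^2 + L * (s * s powr \<alpha> * d^2)"
  proof -
    have "L * norm (- (s *\<^sub>R g)) powr (1 + \<alpha>) \<le> L * (s * s powr \<alpha> * d^2)"
      using pw L by (intro mult_left_mono) auto
    then show ?thesis using A1[of "\<theta> - s *\<^sub>R g"] desc gg by linarith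
  qed
  also have "L * (s * s powr \<alpha> * d^2) = s * d^2 / 2" using Ls by (simp add: algebra_simps)
  finally have "s * d^2 \<le> 2 * (F \<theta> - Flb)" by simp
  then have "d^2 \<le> 2 * (F \<theta> - Flb) / s" using s0 by (simp add: field_simps)
  also have "2 * (F \<theta> - Flb) / s = (2 * (2*L) powr (1/\<alpha>)) * (F \<theta> - Flb)"
    unfolding s_def using L by (simp add: powr_minus_divide divide_simps powr_minus)
  finally show ?thesis unfolding d_def g_def by simp
qed

lemma floor_approx_tendsto:
  fixes t :: real
  shows "(\<lambda>m. real_of_int \<lfloor>real (Suc m) * t\<rfloor> / real (Suc m)) \<longlonglongrightarrow> t"
proof (rule tendsto_sandwich[where f="\<lambda>m. t - 1 / real (Suc m)" and h="\<lambda>m. t"])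
  show "\<forall>\<^sub>F m in sequentially. t - 1 / real (Suc m) \<le> real_of_int \<lfloor>real (Suc m) * t\<rfloor> / real (Suc m)"
  proof (intro always_eventually allI)
    fix m
    have "real (Suc m) * t - 1 \<le> real_of_int \<lfloor>real (Suc m) * t\<rfloor>" by linarith
    then have "(real (Suc m) * t - 1) / real (Suc m) \<le> real_of_int \<lfloor>real (Suc m) * t\<rfloor> / real (Suc m)"
      by (rule divide_right_mono) simp
    moreover have "(real (Suc m) * t - 1) / real (Suc m) = t - 1 / real (Suc m)"
      by (simp add: diff_divide_distrib)
    ultimately show "t - 1 / real (Suc m) \<le> real_of_int \<lfloor>real (Suc m) * t\<rfloor> / real (Suc m)"
      by simp
  qed
  show "\<forall>\<^sub>F m in sequentially. real_of_int \<lfloor>real (Suc m) * t\<rfloor> / real (Suc m) \<le> t"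
  proof (intro always_eventually allI)
    fix m
    have "real_of_int \<lfloor>real (Suc m) * t\<rfloor> \<le> real (Suc m) * t" by linarith
    then have "real_of_int \<lfloor>real (Suc m) * t\<rfloor> / real (Suc m) \<le> real (Suc m) * t / real (Suc m)"
      by (rule divide_right_mono) simp
    then show "real_of_int \<lfloor>real (Suc m) * t\<rfloor> / real (Suc m) \<le> t"
      by simp
  qed
  have "(\<lambda>m. 1 / real (Suc m)) \<longlonglongrightarrow> 0" using LIMSEQ_inverse_real_of_nat by (simp add: inverse_eq_divide)
  then show "(\<lambda>m. t - 1 / real (Suc m)) \<longlonglongrightarrow> t" using tendsto_diff[of "\<lambda>_. t" t] by fastforce
qed simp

lemma f_joint_meas:
  fixes f :: "real^'n \<Rightarrow> 'x \<Rightarrow> real"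
  assumes cont: "\<And>x. continuous_on UNIV (\<lambda>t. f t x)"
    and meas: "\<And>\<theta>. f \<theta> \<in> borel_measurable D"
  shows "(\<lambda>p. f (fst p) (snd p)) \<in> borel_measurable (borel \<Otimes>\<^sub>M D)"
proof (rule borel_measurable_LIMSEQ_metric)
  define idx where "idx m \<theta> = (\<chi> i. \<lfloor>real (Suc m) * (\<theta> $ i)\<rfloor>)" for m and \<theta> :: "real^'n"
  define val where "val m (k::int^'n) = (\<chi> i. real_of_int (k $ i) / real (Suc m))" for m k
  fix m
  have comp: "(\<lambda>\<theta>::real^'n. \<lfloor>real (Suc m) * (\<theta> $ i)\<rfloor>) \<in> measurable borel (count_space UNIV)" for i
  proof -
    have "(\<lambda>\<theta>::real^'n. real (Suc m) * (\<theta> $ i)) \<in> borel_measurable borel"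
      by (intro borel_measurable_continuous_onI continuous_intros)
    then show ?thesis using measurable_compose[OF _ measurable_real_floor] by blast
  qed
  have idx0: "idx m \<in> measurable borel (count_space UNIV)"
  proof (subst measurable_count_space_eq2_countable, safe)
    fix k :: "int^'n"
    have "idx m -` {k} = (\<Inter>i. (\<lambda>\<theta>::real^'n. \<lfloor>real (Suc m) * (\<theta> $ i)\<rfloor>) -` {k $ i})"
      by (auto simp: idx_def vec_eq_iff)
    moreover have "(\<Inter>i. (\<lambda>\<theta>::real^'n. \<lfloor>real (Suc m) * (\<theta> $ i)\<rfloor>) -` {k $ i}) \<in> sets borel"
    proof (rule sets.finite_INT)
      fix i
      have "(\<lambda>\<theta>::real^'n. \<lfloor>real (Suc m) * (\<theta> $ i)\<rfloor>) -` {k $ i} \<inter> space borel \<in> sets borel"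
        by (rule measurable_sets[OF comp]) simp
      then show "(\<lambda>\<theta>::real^'n. \<lfloor>real (Suc m) * (\<theta> $ i)\<rfloor>) -` {k $ i} \<in> sets borel" by simp
    qed auto
    ultimately show "idx m -` {k} \<inter> space borel \<in> sets borel" by simp
  qed simp
  have idxm: "(\<lambda>p. idx m (fst p)) \<in> measurable (borel \<Otimes>\<^sub>M D) (count_space UNIV)"
    using measurable_compose[OF measurable_fst idx0, of D] by (simp add: comp_def)
  have "(\<lambda>p. (\<lambda>k p. f (val m k) (snd p)) (idx m (fst p)) p) \<in> borel_measurable (borel \<Otimes>\<^sub>M D)"
    by (rule measurable_compose_countable[OF _ idxm]) (rule measurable_compose[OF measurable_snd meas])
  then show "(\<lambda>p. f (val m (idx m (fst p))) (snd p)) \<in> borel_measurable (borel \<Otimes>\<^sub>M D)" by simp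
next
  define idx where "idx m \<theta> = (\<chi> i. \<lfloor>real (Suc m) * (\<theta> $ i)\<rfloor>)" for m and \<theta> :: "real^'n"
  define val where "val m (k::int^'n) = (\<chi> i. real_of_int (k $ i) / real (Suc m))" for m k
  fix p :: "(real^'n) \<times> 'x"
  have "(\<lambda>m. val m (idx m (fst p))) \<longlonglongrightarrow> fst p"
    by (rule vec_tendstoI) (simp only: val_def idx_def vec_lambda_beta floor_approx_tendsto)
  moreover have "isCont (\<lambda>t. f t (snd p)) (fst p)"
    using cont[of "snd p"] by (simp add: continuous_on_eq_continuous_at)
  ultimately show "(\<lambda>m. f (val m (idx m (fst p))) (snd p)) \<longlonglongrightarrow> f (fst p) (snd p)"
    using isCont_tendsto_compose by blast
qed

lemma fdot_joint_meas:
  fixes f :: "real^'n \<Rightarrow> 'x \<Rightarrow> real" and fdot :: "real^'n \<Rightarrow> 'x \<Rightarrow> real^'n"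
  assumes f_diff: "\<And>\<theta> x. ((\<lambda>t. f t x) has_derivative (\<lambda>h. fdot \<theta> x \<bullet> h)) (at \<theta>)"
    and meas: "\<And>\<theta>. f \<theta> \<in> borel_measurable D"
  shows "(\<lambda>p. fdot (fst p) (snd p)) \<in> borel_measurable (borel \<Otimes>\<^sub>M D)"
proof -
  have cont: "continuous_on UNIV (\<lambda>t. f t x)" for x
    by (intro continuous_at_imp_continuous_on ballI has_derivative_continuous[OF f_diff])
  have fj: "(\<lambda>p. f (fst p) (snd p)) \<in> borel_measurable (borel \<Otimes>\<^sub>M D)"
    by (rule f_joint_meas[OF cont meas])
  show ?thesis
  proof (subst borel_measurable_euclidean_space, intro ballI)
    fix e :: "real^'n"
    show "(\<lambda>p. fdot (fst p) (snd p) \<bullet> e) \<in> borel_measurable (borel \<Otimes>\<^sub>M D)"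
    proof (rule borel_measurable_LIMSEQ_metric)
      fix i :: nat
      have g: "(\<lambda>p. (fst p + (1 / real (Suc i)) *\<^sub>R e, snd p)) \<in> measurable (borel \<Otimes>\<^sub>M D) (borel \<Otimes>\<^sub>M D)"
        by measurable
      have "(\<lambda>p. f (fst p + (1 / real (Suc i)) *\<^sub>R e) (snd p)) \<in> borel_measurable (borel \<Otimes>\<^sub>M D)"
        using measurable_compose[OF g fj] by simp
      then show "(\<lambda>p. (f (fst p + (1 / real (Suc i)) *\<^sub>R e) (snd p) - f (fst p) (snd p)) * real (Suc i))
          \<in> borel_measurable (borel \<Otimes>\<^sub>M D)"
        using fj by measurable
    next
      fix p :: "(real^'n) \<times> 'x"
      define \<psi> where "\<psi> h = f (fst p + h *\<^sub>R e) (snd p)" for h :: real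
      have der: "DERIV \<psi> 0 :> fdot (fst p) (snd p) \<bullet> e"
      proof -
        have l: "((\<lambda>h::real. fst p + h *\<^sub>R e) has_derivative (\<lambda>h. h *\<^sub>R e)) (at 0)"
          by (auto intro!: derivative_eq_intros)
        have "((\<lambda>h. f (fst p + h *\<^sub>R e) (snd p)) has_derivative (\<lambda>h. fdot (fst p) (snd p) \<bullet> (h *\<^sub>R e))) (at 0)"
          using has_derivative_compose[OF l f_diff] by simp
        moreover have "(\<lambda>h. fdot (fst p) (snd p) \<bullet> (h *\<^sub>R e)) = (*) (fdot (fst p) (snd p) \<bullet> e)"
          by (auto simp: fun_eq_iff)
        ultimately show ?thesis unfolding \<psi>_def has_field_derivative_def by simp
      qed
      then have lim: "((\<lambda>h. (\<psi> h - \<psi> 0) / h) \<longlongrightarrow> fdot (fst p) (snd p) \<bullet> e) (at 0)"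
        unfolding DERIV_def by simp
      have sq: "filterlim (\<lambda>m. 1 / real (Suc m)) (at 0) sequentially"
      proof (subst filterlim_at, intro conjI)
        show "(\<lambda>m. 1 / real (Suc m)) \<longlonglongrightarrow> 0"
          using LIMSEQ_inverse_real_of_nat by (simp add: inverse_eq_divide)
      qed simp
      have "(\<lambda>m. (\<psi> (1 / real (Suc m)) - \<psi> 0) / (1 / real (Suc m))) \<longlonglongrightarrow> fdot (fst p) (snd p) \<bullet> e"
        using filterlim_compose[OF lim sq] by (simp add: comp_def)
      then show "(\<lambda>i. (f (fst p + (1 / real (Suc i)) *\<^sub>R e) (snd p) - f (fst p) (snd p)) * real (Suc i))
          \<longlonglongrightarrow> fdot (fst p) (snd p) \<bullet> e"
        unfolding \<psi>_def by simp
    qed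
  qed
qed

lemma powr_le_1_sq:
  fixes t a :: real
  assumes "t \<ge> 0" "0 < a" "a \<le> 1"
  shows "t powr (1 + a) \<le> 1 + t^2"
proof (cases "t \<le> 1")
  case True
  have "t powr (1 + a) \<le> 1 powr (1 + a)" using assms True by (intro powr_mono2) auto
  then have "t powr (1 + a) \<le> 1" by simp
  moreover have "0 \<le> t^2" by simp
  ultimately show ?thesis by linarith
next
  case False
  then have "t powr (1 + a) \<le> t powr 2" using assms by (intro powr_mono) auto
  also have "\<dots> = t^2" using False by (simp add: powr_numeral)
  finally show ?thesis by simp
qed

lemma step_bound:
  fixes D :: "'x measure" and F :: "real^'n \<Rightarrow> real" and Fdot :: "real^'n \<Rightarrow> real^'n"
    and fdot :: "real^'n \<Rightarrow> 'x \<Rightarrow> real^'n" and A :: "real^'n^'n"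
  assumes D_prob: "prob_space D"
    and fdot_meas: "\<And>\<theta>. fdot \<theta> \<in> borel_measurable D"
    and F_diff: "\<And>\<theta>. (F has_derivative (\<lambda>h. Fdot \<theta> \<bullet> h)) (at \<theta>)"
    and sym: "transpose A = A" and pd: "\<And>v. v \<noteq> 0 \<Longrightarrow> v \<bullet> (A *v v) > 0"
    and alpha: "0 < \<alpha>" "\<alpha> \<le> 1"
    and A1: "\<And>\<theta>. F \<theta> \<ge> Flb"
    and A2: "\<And>\<theta>. has_bochner_integral D (fdot \<theta>) (Fdot \<theta>)"
    and C_nonneg: "C1 \<ge> 0" "C2 \<ge> 0" "C3 \<ge> 1"
    and A3b: "\<And>\<theta>. (\<integral>\<^sup>+x. ennreal ((norm (fdot \<theta> x))\<^sup>2) \<partial>D)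
                 \<le> ennreal (C1 + C2 * (F \<theta> - Flb) + C3 * (norm (Fdot \<theta>))\<^sup>2)"
    and L_pos: "L > 0"
    and A4b: "\<And>\<phi>1 \<phi>2. norm (Fdot \<phi>1 - Fdot \<phi>2) \<le> L * norm (\<phi>1 - \<phi>2) powr \<alpha>"
  shows "(\<integral>\<^sup>+x. ennreal (F (\<theta> - A *v fdot \<theta> x) - Flb) \<partial>D)
     \<le> ennreal ((F \<theta> - Flb) + (L * (1 + C1 + C3 + C2 + C3 * (2 * (2*L) powr (1/\<alpha>))))
           * lambda_max A powr (1 + \<alpha>) * (1 + (F \<theta> - Flb)))"
proof -
  interpret D: prob_space D by (rule D_prob)
  define g where "g = fdot \<theta>"
  define a where "a = Fdot \<theta>"
  define lam where "lam = lambda_max A"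
  define G where "G = F \<theta> - Flb"
  define Kg where "Kg = 2 * (2*L) powr (1/\<alpha>)"
  have G0: "G \<ge> 0" using A1[of \<theta>] unfolding G_def by simp
  have Kg0: "Kg \<ge> 0" unfolding Kg_def by simp
  have lam: "0 < lam" "\<And>v. norm (A *v v) \<le> lam * norm v"
    using norm_bound_lmax[OF sym pd] unfolding lam_def by auto
  have gmeas[measurable]: "g \<in> borel_measurable D" unfolding g_def by (rule fdot_meas)
  have Fcont: "continuous_on UNIV F"
    by (intro continuous_at_imp_continuous_on ballI has_derivative_continuous[OF F_diff])
  have Fmeas[measurable]: "F \<in> borel_measurable borel" by (rule borel_measurable_continuous_onI[OF Fcont])
  define R where "R x = G - (A *v a) \<bullet> g x + L * lam powr (1 + \<alpha>) * (1 + (norm (g x))^2)" for x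
  have ptw: "F (\<theta> - A *v g x) - Flb \<le> R x" for x
  proof -
    have d: "F (\<theta> - A *v g x) \<le> F \<theta> + a \<bullet> (- (A *v g x)) + L * norm (- (A *v g x)) powr (1 + \<alpha>)"
      using descent[OF F_diff A4b alpha(1) L_pos, of "\<theta> - A *v g x" \<theta>] unfolding a_def by simp
    have i: "a \<bullet> (- (A *v g x)) = - ((A *v a) \<bullet> g x)"
      using sym_inner[OF sym, of "g x" a] by (simp add: inner_commute)
    have "norm (A *v g x) powr (1 + \<alpha>) \<le> (lam * norm (g x)) powr (1 + \<alpha>)"
      using lam(2)[of "g x"] alpha by (intro powr_mono2) auto
    also have "\<dots> = lam powr (1 + \<alpha>) * norm (g x) powr (1 + \<alpha>)"
      using lam(1) by (simp add: powr_mult)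
    also have "\<dots> \<le> lam powr (1 + \<alpha>) * (1 + (norm (g x))^2)"
      using powr_le_1_sq[of "norm (g x)" \<alpha>] alpha by (intro mult_left_mono) auto
    finally have "L * norm (A *v g x) powr (1 + \<alpha>) \<le> L * (lam powr (1 + \<alpha>) * (1 + (norm (g x))^2))"
      using L_pos by (intro mult_left_mono) auto
    then show ?thesis using d i unfolding R_def G_def by simp
  qed
  have gint: "integrable D g" using A2[of \<theta>] unfolding g_def by (simp add: integrable.intros)
  have gI: "integral\<^sup>L D g = a" using A2[of \<theta>] unfolding g_def a_def by (simp add: has_bochner_integral_integral_eq)
  have n2fin: "(\<integral>\<^sup>+x. ennreal ((norm (g x))\<^sup>2) \<partial>D) \<le> ennreal (C1 + C2 * G + C3 * (norm a)\<^sup>2)"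
    using A3b[of \<theta>] unfolding g_def G_def a_def by simp
  have n2int: "integrable D (\<lambda>x. (norm (g x))^2)"
  proof (rule integrableI_bounded)
    show "(\<lambda>x. (norm (g x))^2) \<in> borel_measurable D" by measurable
    have "(\<integral>\<^sup>+x. ennreal (norm ((norm (g x))^2)) \<partial>D) = (\<integral>\<^sup>+x. ennreal ((norm (g x))\<^sup>2) \<partial>D)" by simp
    also have "\<dots> < \<infinity>" using n2fin by (simp add: le_less_trans)
    finally show "(\<integral>\<^sup>+x. ennreal (norm ((norm (g x))^2)) \<partial>D) < \<infinity>" .
  qed
  have n2I: "(\<integral>x. (norm (g x))^2 \<partial>D) \<le> C1 + C2 * G + C3 * (norm a)\<^sup>2"
  proof -
    have "ennreal (\<integral>x. (norm (g x))^2 \<partial>D) = (\<integral>\<^sup>+x. ennreal ((norm (g x))\<^sup>2) \<partial>D)"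
      by (rule nn_integral_eq_integral[OF n2int, symmetric]) auto
    also have "\<dots> \<le> ennreal (C1 + C2 * G + C3 * (norm a)\<^sup>2)" by (rule n2fin)
    finally show ?thesis using C_nonneg G0
      by (subst (asm) ennreal_le_iff) (auto intro!: add_nonneg_nonneg)
  qed
  have Rint: "integrable D R"
    unfolding R_def using gint n2int by (intro Bochner_Integration.integrable_add Bochner_Integration.integrable_diff integrable_mult_right) auto
  have RI: "(\<integral>x. R x \<partial>D) = G - (A *v a) \<bullet> a + L * lam powr (1 + \<alpha>) * (1 + (\<integral>x. (norm (g x))^2 \<partial>D))"
  proof -
    have "(\<integral>x. R x \<partial>D) = (\<integral>x. G \<partial>D) - (\<integral>x. (A *v a) \<bullet> g x \<partial>D) + (\<integral>x. L * lam powr (1 + \<alpha>) * (1 + (norm (g x))^2) \<partial>D)"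
      unfolding R_def using gint n2int
      by (subst Bochner_Integration.integral_add, force, force, subst Bochner_Integration.integral_diff) auto
    also have "(\<integral>x. (A *v a) \<bullet> g x \<partial>D) = (A *v a) \<bullet> a" using gint gI by simp
    also have "(\<integral>x. L * lam powr (1 + \<alpha>) * (1 + (norm (g x))^2) \<partial>D) = L * lam powr (1 + \<alpha>) * (1 + (\<integral>x. (norm (g x))^2 \<partial>D))"
      using n2int by (simp add: Bochner_Integration.integral_add D.prob_space)
    finally show ?thesis by (simp add: D.prob_space)
  qed
  have pos: "(A *v a) \<bullet> a \<ge> 0"
  proof (cases "a = 0")
    case True then show ?thesis by simp
  next
    case False then show ?thesis using pd[of a] by (simp add: inner_commute less_imp_le)
  qed
  have gd: "(norm a)^2 \<le> 1 + Kg * G"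
    using grad_dom[OF F_diff A4b alpha L_pos A1, of \<theta>] unfolding a_def Kg_def G_def by simp
  have lp: "lam powr (1 + \<alpha>) \<ge> 0" by simp
  have "(\<integral>x. R x \<partial>D) \<le> G + L * lam powr (1 + \<alpha>) * (1 + (C1 + C2 * G + C3 * (1 + Kg * G)))"
  proof -
    have "C1 + C2 * G + C3 * (norm a)\<^sup>2 \<le> C1 + C2 * G + C3 * (1 + Kg * G)"
      using gd C_nonneg by (intro add_left_mono mult_left_mono) auto
    then have "(\<integral>x. (norm (g x))^2 \<partial>D) \<le> C1 + C2 * G + C3 * (1 + Kg * G)" using n2I by linarith
    then have "L * lam powr (1 + \<alpha>) * (1 + (\<integral>x. (norm (g x))^2 \<partial>D)) \<le> L * lam powr (1 + \<alpha>) * (1 + (C1 + C2 * G + C3 * (1 + Kg * G)))"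
      using L_pos lp by (intro mult_left_mono) auto
    then show ?thesis unfolding RI using pos by linarith
  qed
  also have "\<dots> \<le> G + (L * (1 + C1 + C3 + C2 + C3 * Kg)) * lam powr (1 + \<alpha>) * (1 + G)"
  proof -
    have "1 + (C1 + C2 * G + C3 * (1 + Kg * G)) \<le> (1 + C1 + C3 + C2 + C3 * Kg) * (1 + G)"
      using G0 C_nonneg Kg0 by (simp add: algebra_simps mult_nonneg_nonneg add_nonneg_nonneg)
    then have "L * lam powr (1 + \<alpha>) * (1 + (C1 + C2 * G + C3 * (1 + Kg * G))) \<le> L * lam powr (1 + \<alpha>) * ((1 + C1 + C3 + C2 + C3 * Kg) * (1 + G))"
      using L_pos lp by (intro mult_left_mono) auto
    then show ?thesis by (simp add: algebra_simps)
  qed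
  finally have RIb: "(\<integral>x. R x \<partial>D) \<le> G + (L * (1 + C1 + C3 + C2 + C3 * Kg)) * lam powr (1 + \<alpha>) * (1 + G)" .
  have "(\<integral>\<^sup>+x. ennreal (F (\<theta> - A *v fdot \<theta> x) - Flb) \<partial>D) \<le> (\<integral>\<^sup>+x. ennreal (R x) \<partial>D)"
    using ptw unfolding g_def by (intro nn_integral_mono ennreal_leI) auto
  also have "\<dots> = ennreal (\<integral>x. R x \<partial>D)"
  proof (rule nn_integral_eq_integral[OF Rint])
    have "0 \<le> R x" for x using ptw[of x] A1[of "\<theta> - A *v g x"] by linarith
    then show "AE x in D. 0 \<le> R x" by simp
  qed
  also have "\<dots> \<le> ennreal (G + (L * (1 + C1 + C3 + C2 + C3 * Kg)) * lam powr (1 + \<alpha>) * (1 + G))"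
    using RIb by (rule ennreal_leI)
  finally show ?thesis unfolding G_def Kg_def lam_def .
qed

lemma trunc_tail:
  fixes G T \<gamma> :: real
  assumes G: "G \<ge> 0" and T: "T > 0" and g: "0 < \<gamma>" "\<gamma> < 1"
  shows "G powr \<gamma> - min (G powr \<gamma>) T \<le> T powr (1 - 1/\<gamma>) * G"
proof (cases "G powr \<gamma> \<le> T")
  case True
  then show ?thesis using G by simp
next
  case False
  define y where "y = G powr \<gamma>"
  have yT: "y > T" using False unfolding y_def by simp
  have G0: "G > 0" using False G T by (cases "G = 0") auto
  have Gy: "G = y powr (1/\<gamma>)" unfolding y_def using G0 g by (simp add: powr_powr)
  have "y powr (1 - 1/\<gamma>) \<le> T powr (1 - 1/\<gamma>)"
    using g T yT by (intro powr_mono2') (auto simp: field_simps)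
  then have "y powr (1 - 1/\<gamma>) * G \<le> T powr (1 - 1/\<gamma>) * G" using G by (rule mult_right_mono)
  moreover have "y powr (1 - 1/\<gamma>) * G = y"
    unfolding Gy using yT T by (simp add: powr_add[symmetric])
  ultimately show ?thesis using yT T unfolding y_def by simp
qed

lemma L1_conv:
  fixes M :: "'a measure" and Gk :: "nat \<Rightarrow> 'a \<Rightarrow> real" and Z :: "'a \<Rightarrow> real"
  assumes M: "prob_space M"
    and Gm[measurable]: "\<And>k. Gk k \<in> borel_measurable M" and Zm[measurable]: "Z \<in> borel_measurable M"
    and G0: "\<And>k \<omega>. Gk k \<omega> \<ge> 0"
    and lim: "AE \<omega> in M. (\<lambda>k. Gk k \<omega>) \<longlonglongrightarrow> Z \<omega>"
    and Gint: "\<And>k. integrable M (Gk k)"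
    and GB: "\<And>k. (\<integral>\<omega>. Gk k \<omega> \<partial>M) \<le> B"
    and g: "0 < \<gamma>" "\<gamma> < 1"
  shows "(\<lambda>k. \<integral>\<^sup>+\<omega>. ennreal \<bar>Gk k \<omega> powr \<gamma> - Z \<omega> powr \<gamma>\<bar> \<partial>M) \<longlonglongrightarrow> 0"
proof -
  interpret prob_space M by (rule M)
  have B0: "B \<ge> 0" using GB[of 0] integral_nonneg_AE[of "Gk 0" M] G0 by (meson AE_I2 order_trans)
  have Z0: "AE \<omega> in M. Z \<omega> \<ge> 0"
    using lim by eventually_elim (auto intro: LIMSEQ_le_const G0)
  have Zlim: "AE \<omega> in M. ennreal (Z \<omega>) = liminf (\<lambda>k. ennreal (Gk k \<omega>))"
    using lim
  proof eventually_elim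
    case (elim \<omega>)
    have "(\<lambda>k. ennreal (Gk k \<omega>)) \<longlonglongrightarrow> ennreal (Z \<omega>)" by (rule tendsto_ennrealI[OF elim])
    then show ?case by (intro lim_imp_Liminf[symmetric]) auto
  qed
  have EGk: "(\<integral>\<^sup>+\<omega>. ennreal (Gk k \<omega>) \<partial>M) = ennreal (\<integral>\<omega>. Gk k \<omega> \<partial>M)" for k
    using Gint G0 by (intro nn_integral_eq_integral) auto
  have "(\<integral>\<^sup>+\<omega>. ennreal (Z \<omega>) \<partial>M) = (\<integral>\<^sup>+\<omega>. liminf (\<lambda>k. ennreal (Gk k \<omega>)) \<partial>M)"
    using Zlim by (rule nn_integral_cong_AE)
  also have "\<dots> \<le> liminf (\<lambda>k. \<integral>\<^sup>+\<omega>. ennreal (Gk k \<omega>) \<partial>M)"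
    by (rule nn_integral_liminf) simp
  also have "\<dots> \<le> limsup (\<lambda>k. \<integral>\<^sup>+\<omega>. ennreal (Gk k \<omega>) \<partial>M)"
    by (rule Liminf_le_Limsup) simp
  also have "\<dots> \<le> ennreal B"
    by (rule Limsup_bounded) (simp add: EGk ennreal_leI GB)
  finally have EZ: "(\<integral>\<^sup>+\<omega>. ennreal (Z \<omega>) \<partial>M) \<le> ennreal B" .
  have Zint: "integrable M Z"
    by (rule integrableI_nonneg) (use Z0 EZ in \<open>auto simp: le_less_trans\<close>)
  have ZB: "(\<integral>\<omega>. Z \<omega> \<partial>M) \<le> B"
  proof -
    have "ennreal (\<integral>\<omega>. Z \<omega> \<partial>M) = (\<integral>\<^sup>+\<omega>. ennreal (Z \<omega>) \<partial>M)"
      using Zint Z0 by (intro nn_integral_eq_integral[symmetric])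
    then have "ennreal (\<integral>\<omega>. Z \<omega> \<partial>M) \<le> ennreal B" using EZ by simp
    then show ?thesis using B0 ennreal_le_iff by blast
  qed
  define Y where "Y k \<omega> = Gk k \<omega> powr \<gamma>" for k \<omega>
  define W where "W \<omega> = Z \<omega> powr \<gamma>" for \<omega>
  have Ym[measurable]: "Y k \<in> borel_measurable M" for k unfolding Y_def by measurable
  have Wm[measurable]: "W \<in> borel_measurable M" unfolding W_def by measurable
  have powr_le: "x powr \<gamma> \<le> 1 + x" if "x \<ge> 0" for x :: real
  proof (cases "x \<le> 1")
    case True
    then have "x powr \<gamma> \<le> 1 powr \<gamma>" using that g by (intro powr_mono2) auto
    then show ?thesis using that by simp
  next
    case False
    then have "x powr \<gamma> \<le> x powr 1" using g by (intro powr_mono) auto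
    then show ?thesis using False by simp
  qed
  have Yint: "integrable M (Y k)" for k
  proof (rule Bochner_Integration.integrable_bound[where f="\<lambda>\<omega>. 1 + Gk k \<omega>"])
    show "integrable M (\<lambda>\<omega>. 1 + Gk k \<omega>)" using Gint by simp
    show "AE \<omega> in M. norm (Y k \<omega>) \<le> norm (1 + Gk k \<omega>)"
      using G0 powr_le unfolding Y_def by (auto intro!: AE_I2)
  qed simp
  have Wint: "integrable M W"
  proof (rule Bochner_Integration.integrable_bound[where f="\<lambda>\<omega>. 1 + Z \<omega>"])
    show "integrable M (\<lambda>\<omega>. 1 + Z \<omega>)" using Zint by simp
    show "AE \<omega> in M. norm (W \<omega>) \<le> norm (1 + Z \<omega>)"
      using Z0 by eventually_elim (use powr_le in \<open>auto simp: W_def\<close>)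
  qed simp
  define a where "a k = (\<integral>\<omega>. \<bar>Y k \<omega> - W \<omega>\<bar> \<partial>M)" for k
  have aint: "integrable M (\<lambda>\<omega>. \<bar>Y k \<omega> - W \<omega>\<bar>)" for k using Yint Wint by simp
  have a_eq: "(\<integral>\<^sup>+\<omega>. ennreal \<bar>Gk k \<omega> powr \<gamma> - Z \<omega> powr \<gamma>\<bar> \<partial>M) = ennreal (a k)" for k
    unfolding a_def Y_def W_def using aint[of k] unfolding Y_def W_def by (intro nn_integral_eq_integral) auto
  have a0: "a k \<ge> 0" for k unfolding a_def by simp
  have "a \<longlonglongrightarrow> 0"
  proof (rule order_tendstoI)
    fix e :: real assume "e < 0"
    then have "e < a k" for k using a0[of k] by linarith
    then show "\<forall>\<^sub>F k in sequentially. e < a k" by simp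
  next
    fix e :: real assume e: "0 < e"
    define s where "s = 1 - 1/\<gamma>"
    have s: "s < 0" unfolding s_def using g by (simp add: field_simps)
    have "((\<lambda>T::real. T powr s) \<longlongrightarrow> 0) at_top" using tendsto_neg_powr[OF s filterlim_ident] .
    then have "\<forall>\<^sub>F T in at_top. T powr s < e / (4 * B + 1)" using e B0 by (intro order_tendstoD) auto
    moreover have "\<forall>\<^sub>F T::real in at_top. T > 0" by (rule eventually_gt_at_top)
    ultimately have "\<forall>\<^sub>F T::real in at_top. T powr s < e / (4 * B + 1) \<and> T > 0" by (rule eventually_conj)
    then obtain T where Ts: "T powr s < e / (4 * B + 1)" and T: "T > 0"
      by (auto simp: eventually_at_top_linorder)
    have TsB: "T powr s * (2 * B) \<le> e / 2"
    proof -
      have "T powr s * (2 * B) \<le> e / (4 * B + 1) * (2 * B)" using Ts B0 by (intro mult_right_mono) auto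
      also have "\<dots> \<le> e / 2" using e B0 by (simp add: field_simps)
      finally show ?thesis .
    qed
    define u where "u k \<omega> = \<bar>min (Y k \<omega>) T - min (W \<omega>) T\<bar>" for k \<omega>
    have um[measurable]: "u k \<in> borel_measurable M" for k unfolding u_def by measurable
    have "(\<lambda>k. \<integral>\<omega>. u k \<omega> \<partial>M) \<longlonglongrightarrow> (\<integral>\<omega>. 0 \<partial>M)"
    proof (rule integral_dominated_convergence[where w="\<lambda>_. 2 * T"])
      show "AE \<omega> in M. (\<lambda>k. u k \<omega>) \<longlonglongrightarrow> 0"
        using lim Z0
      proof eventually_elim
        case (elim \<omega>)
        have "(\<lambda>k. Y k \<omega>) \<longlonglongrightarrow> W \<omega>" unfolding Y_def W_def
          using elim g G0 by (intro tendsto_powr') auto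
        then have "(\<lambda>k. min (Y k \<omega>) T - min (W \<omega>) T) \<longlonglongrightarrow> min (W \<omega>) T - min (W \<omega>) T"
          by (intro tendsto_intros)
        then have "(\<lambda>k. \<bar>min (Y k \<omega>) T - min (W \<omega>) T\<bar>) \<longlonglongrightarrow> \<bar>min (W \<omega>) T - min (W \<omega>) T\<bar>"
          by (rule tendsto_rabs)
        then show ?case unfolding u_def by simp
      qed
      show "AE \<omega> in M. norm (u k \<omega>) \<le> 2 * T" for k
      proof (rule AE_I2)
        fix \<omega>
        have "Y k \<omega> \<ge> 0" "W \<omega> \<ge> 0" unfolding Y_def W_def by auto
        then show "norm (u k \<omega>) \<le> 2 * T" unfolding u_def using T by auto
      qed
    qed auto
    then have "(\<lambda>k. \<integral>\<omega>. u k \<omega> \<partial>M) \<longlonglongrightarrow> 0" by simp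
    then have "\<forall>\<^sub>F k in sequentially. (\<integral>\<omega>. u k \<omega> \<partial>M) < e / 2" using e by (intro order_tendstoD) auto
    then show "\<forall>\<^sub>F k in sequentially. a k < e"
    proof eventually_elim
      case (elim k)
      have uint: "integrable M (u k)"
      proof (rule Bochner_Integration.integrable_bound[where f="\<lambda>_. 2 * T"])
        show "AE \<omega> in M. norm (u k \<omega>) \<le> norm (2 * T)"
        proof (rule AE_I2)
          fix \<omega>
          have "Y k \<omega> \<ge> 0" "W \<omega> \<ge> 0" unfolding Y_def W_def by auto
          then show "norm (u k \<omega>) \<le> norm (2 * T)" unfolding u_def using T by auto
        qed
      qed auto
      have pt: "AE \<omega> in M. \<bar>Y k \<omega> - W \<omega>\<bar> \<le> u k \<omega> + T powr s * (Gk k \<omega> + Z \<omega>)"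
        using Z0
      proof eventually_elim
        case (elim \<omega>)
        have t1: "Y k \<omega> - min (Y k \<omega>) T \<le> T powr s * Gk k \<omega>"
          unfolding Y_def s_def using trunc_tail[OF G0 T g] .
        have t2: "W \<omega> - min (W \<omega>) T \<le> T powr s * Z \<omega>"
          unfolding W_def s_def using trunc_tail[OF elim T g] .
        have "\<bar>Y k \<omega> - W \<omega>\<bar> \<le> u k \<omega> + (Y k \<omega> - min (Y k \<omega>) T) + (W \<omega> - min (W \<omega>) T)"
          unfolding u_def by (simp add: min_def split: if_splits abs_split)
        then show ?case using t1 t2 by (simp add: algebra_simps)
      qed
      have "a k \<le> (\<integral>\<omega>. u k \<omega> + T powr s * (Gk k \<omega> + Z \<omega>) \<partial>M)"
        unfolding a_def using pt aint uint Gint Zint by (intro integral_mono_AE) auto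
      also have "\<dots> = (\<integral>\<omega>. u k \<omega> \<partial>M) + T powr s * ((\<integral>\<omega>. Gk k \<omega> \<partial>M) + (\<integral>\<omega>. Z \<omega> \<partial>M))"
        using uint Gint Zint by simp
      also have "T powr s * ((\<integral>\<omega>. Gk k \<omega> \<partial>M) + (\<integral>\<omega>. Z \<omega> \<partial>M)) \<le> T powr s * (2 * B)"
        using GB[of k] ZB by (intro mult_left_mono) auto
      finally show ?case using elim TsB by linarith
    qed
  qed
  then have "(\<lambda>k. ennreal (a k)) \<longlonglongrightarrow> ennreal 0" by (rule tendsto_ennrealI)
  then show ?thesis unfolding a_eq by simp
qed

primrec sgd :: "real^'n \<Rightarrow> (nat \<Rightarrow> real^'n^'n) \<Rightarrow> (real^'n \<Rightarrow> 'x \<Rightarrow> real^'n) \<Rightarrow> nat \<Rightarrow> (nat \<Rightarrow> 'x) \<Rightarrow> real^'n" where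
  "sgd t0 Mk fd 0 y = t0"
| "sgd t0 Mk fd (Suc k) y = sgd t0 Mk fd k y - Mk k *v fd (sgd t0 Mk fd k y) (y (Suc k))"

lemma sgd_local:
  assumes "\<And>i. i \<in> {1..k} \<Longrightarrow> y i = y' i"
  shows "sgd t0 Mk fd k y = sgd t0 Mk fd k y'"
  using assms
proof (induction k)
  case 0 then show ?case by simp
next
  case (Suc k)
  have "sgd t0 Mk fd k y = sgd t0 Mk fd k y'" using Suc.prems by (intro Suc.IH) auto
  moreover have "y (Suc k) = y' (Suc k)" using Suc.prems by auto
  ultimately show ?case by simp
qed

lemma sgd_meas:
  fixes D :: "'x measure" and Mk :: "nat \<Rightarrow> real^'n^'n" and fd :: "real^'n \<Rightarrow> 'x \<Rightarrow> real^'n"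
  assumes fdj: "(\<lambda>p. fd (fst p) (snd p)) \<in> borel_measurable (borel \<Otimes>\<^sub>M D)"
  shows "{1..k} \<subseteq> I \<Longrightarrow> sgd t0 Mk fd k \<in> borel_measurable (PiM I (\<lambda>_. D))"
proof (induction k)
  case 0 then show ?case by simp
next
  case (Suc k)
  have "{1..k} \<subseteq> {1..Suc k}" by auto
  then have IH: "sgd t0 Mk fd k \<in> borel_measurable (PiM I (\<lambda>_. D))" using Suc by blast
  have SI: "Suc k \<in> I" using Suc.prems by auto
  have pair: "(\<lambda>y. (sgd t0 Mk fd k y, y (Suc k))) \<in> measurable (PiM I (\<lambda>_. D)) (borel \<Otimes>\<^sub>M D)"
    by (intro measurable_Pair IH measurable_component_singleton SI)
  have g: "(\<lambda>y. fd (sgd t0 Mk fd k y) (y (Suc k))) \<in> borel_measurable (PiM I (\<lambda>_. D))"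
    using measurable_compose[OF pair fdj] by simp
  have lin: "(\<lambda>v::real^'n. Mk k *v v) \<in> borel_measurable borel"
    by (intro borel_measurable_continuous_onI linear_continuous_on matrix_vector_mul_bounded_linear)
  have "(\<lambda>y. Mk k *v fd (sgd t0 Mk fd k y) (y (Suc k))) \<in> borel_measurable (PiM I (\<lambda>_. D))"
    using measurable_compose[OF g lin] by simp
  then show ?case using IH by simp
qed

theorem mainTheorem13:
  fixes M :: "'a measure" and D :: "'x measure"
    and X :: "nat \<Rightarrow> 'a \<Rightarrow> 'x"
    and f :: "real^'n \<Rightarrow> 'x \<Rightarrow> real" and fdot :: "real^'n \<Rightarrow> 'x \<Rightarrow> real^'n"
    and F :: "real^'n \<Rightarrow> real" and Fdot :: "real^'n \<Rightarrow> real^'n"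
    and Mk :: "nat \<Rightarrow> real^'n^'n" and theta0 :: "real^'n"
    and theta :: "nat \<Rightarrow> 'a \<Rightarrow> real^'n"
    and Flim :: "'a \<Rightarrow> real"
    and \<alpha> Flb C1 C2 C3 L :: real
  assumes M_prob: "prob_space M" and D_prob: "prob_space D"
    \<comment> \<open>X_1, X_2, ... i.i.d. with common law D (the law of X)\<close>
    and X_indep: "prob_space.indep_vars M (\<lambda>_. D) X {1..}"
    and X_distr: "\<And>k. k \<ge> 1 \<Longrightarrow> distr M D (X k) = D"
    \<comment> \<open>f(., x) differentiable with gradient fdot(., x); fdot measurable in x\<close>
    and f_diff: "\<And>\<theta> x. ((\<lambda>t. f t x) has_derivative (\<lambda>h. fdot \<theta> x \<bullet> h)) (at \<theta>)"
    and fdot_meas: "\<And>\<theta>. fdot \<theta> \<in> borel_measurable D"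
    \<comment> \<open>F = E f(., X) finite and differentiable with gradient Fdot\<close>
    and f_int: "\<And>\<theta>. integrable D (f \<theta>)"
    and F_def: "\<And>\<theta>. F \<theta> = (\<integral>x. f \<theta> x \<partial>D)"
    and F_diff: "\<And>\<theta>. (F has_derivative (\<lambda>h. Fdot \<theta> \<bullet> h)) (at \<theta>)"
    \<comment> \<open>SGD recursion\<close>
    and theta_0: "\<And>\<omega>. theta 0 \<omega> = theta0"
    and theta_Suc: "\<And>k \<omega>. theta (Suc k) \<omega> = theta k \<omega> - Mk k *v fdot (theta k \<omega>) (X (Suc k) \<omega>)"
    \<comment> \<open>(P1)\<close>
    and P1_sym: "\<And>k. transpose (Mk k) = Mk k"
    and P1_pd: "\<And>k v. v \<noteq> 0 \<Longrightarrow> v \<bullet> (Mk k *v v) > 0"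
    \<comment> \<open>(P2)\<close>
    and alpha: "0 < \<alpha>" "\<alpha> \<le> 1"
    and P2: "summable (\<lambda>k. lambda_max (Mk (Suc k)) powr (1 + \<alpha>))"
    \<comment> \<open>(P4)\<close>
    and P4: "(\<lambda>k. lambda_max (Mk k) powr \<alpha> * cond_num (Mk k)) \<longlonglongrightarrow> 0"
    \<comment> \<open>(A1)\<close>
    and A1: "\<And>\<theta>. F \<theta> \<ge> Flb"
    \<comment> \<open>(A2)\<close>
    and A2: "\<And>\<theta>. has_bochner_integral D (fdot \<theta>) (Fdot \<theta>)"
    \<comment> \<open>(A3b)\<close>
    and C_nonneg: "C1 \<ge> 0" "C2 \<ge> 0" "C3 \<ge> 1"
    and A3b: "\<And>\<theta>. (\<integral>\<^sup>+x. ennreal ((norm (fdot \<theta> x))\<^sup>2) \<partial>D)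
                 \<le> ennreal (C1 + C2 * (F \<theta> - Flb) + C3 * (norm (Fdot \<theta>))\<^sup>2)"
    \<comment> \<open>(A4b)\<close>
    and L_pos: "L > 0"
    and A4b: "\<And>\<phi>1 \<phi>2. norm (Fdot \<phi>1 - Fdot \<phi>2) \<le> L * norm (\<phi>1 - \<phi>2) powr \<alpha>"
    \<comment> \<open>F_lim: the almost-sure limit of F(theta_k)\<close>
    and Flim_meas: "Flim \<in> borel_measurable M"
    and Flim_lim: "AE \<omega> in M. (\<lambda>k. F (theta k \<omega>)) \<longlonglongrightarrow> Flim \<omega>"
  shows "(\<forall>k. integrable M (\<lambda>\<omega>. F (theta k \<omega>)))
         \<and> bdd_above (range (\<lambda>k. \<integral>\<omega>. F (theta k \<omega>) \<partial>M))
         \<and> (\<forall>\<gamma>::real. 0 \<le> \<gamma> \<and> \<gamma> < 1 \<longrightarrow>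
              (\<lambda>k. \<integral>\<^sup>+\<omega>. ennreal \<bar>rpow (F (theta k \<omega>) - Flb) \<gamma> - rpow (Flim \<omega> - Flb) \<gamma>\<bar> \<partial>M)
                \<longlonglongrightarrow> 0)"

proof -
  interpret M: prob_space M by (rule M_prob)
  interpret D: prob_space D by (rule D_prob)
  have fmeas: "f \<theta> \<in> borel_measurable D" for \<theta> using f_int[of \<theta>] by (rule borel_measurable_integrable)
  have fdj: "(\<lambda>p. fdot (fst p) (snd p)) \<in> borel_measurable (borel \<Otimes>\<^sub>M D)"
    by (rule fdot_joint_meas[OF f_diff fmeas])
  have Xmeas: "X i \<in> measurable M D" if "i \<ge> 1" for i
    using X_indep that unfolding M.indep_vars_def by auto
  have theta_eq: "theta k \<omega> = sgd theta0 Mk fdot k (\<lambda>i. X i \<omega>)" for k \<omega>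
    by (induction k) (simp_all add: theta_0 theta_Suc)
  have theta_eq': "theta k \<omega> = sgd theta0 Mk fdot k (restrict (\<lambda>i. X i \<omega>) {1..k})" for k \<omega>
    unfolding theta_eq by (rule sgd_local) simp
  have restr: "(\<lambda>\<omega>. restrict (\<lambda>i. X i \<omega>) {1..k}) \<in> measurable M (PiM {1..k} (\<lambda>_. D))" for k
    by (rule measurable_restrict) (use Xmeas in auto)
  have sgdm: "sgd theta0 Mk fdot k \<in> borel_measurable (PiM {1..k} (\<lambda>_. D))" for k
    by (rule sgd_meas[OF fdj]) simp
  have theta_meas[measurable]: "theta k \<in> borel_measurable M" for k
  proof -
    have "(\<lambda>\<omega>. sgd theta0 Mk fdot k (restrict (\<lambda>i. X i \<omega>) {1..k})) \<in> borel_measurable M"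
      using measurable_compose[OF restr sgdm] by simp
    then show ?thesis unfolding theta_eq'[abs_def] .
  qed
  have Fcont: "continuous_on UNIV F"
    by (intro continuous_at_imp_continuous_on ballI has_derivative_continuous[OF F_diff])
  have Fmeas[measurable]: "F \<in> borel_measurable borel" by (rule borel_measurable_continuous_onI[OF Fcont])
  define Kc where "Kc = L * (1 + C1 + C3 + C2 + C3 * (2 * (2*L) powr (1/\<alpha>)))"
  have Kc0: "Kc \<ge> 0" unfolding Kc_def using L_pos C_nonneg by simp
  define c where "c k = Kc * lambda_max (Mk k) powr (1 + \<alpha>)" for k
  have c0: "c k \<ge> 0" for k unfolding c_def using Kc0 by simp
  define G where "G k \<omega> = F (theta k \<omega>) - Flb" for k \<omega>
  have G0: "G k \<omega> \<ge> 0" for k \<omega> unfolding G_def using A1 by simp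
  have Gm[measurable]: "G k \<in> borel_measurable M" for k unfolding G_def by measurable
  define EG where "EG k = (\<integral>\<^sup>+\<omega>. ennreal (G k \<omega>) \<partial>M)" for k
  have step: "EG (Suc k) \<le> (1 + ennreal (c k)) * EG k + ennreal (c k)" for k
  proof -
    define H where "H p = ennreal (F (fst p - Mk k *v fdot (fst p) (snd p)) - Flb)" for p
    have lin: "(\<lambda>v::real^'n. Mk k *v v) \<in> borel_measurable borel"
      by (intro borel_measurable_continuous_onI linear_continuous_on matrix_vector_mul_bounded_linear)
    have Hm: "H \<in> borel_measurable (borel \<Otimes>\<^sub>M D)"
    proof -
      have "(\<lambda>p. Mk k *v fdot (fst p) (snd p)) \<in> borel_measurable (borel \<Otimes>\<^sub>M D)"
        using measurable_compose[OF fdj lin] by simp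
      then have "(\<lambda>p. fst p - Mk k *v fdot (fst p) (snd p)) \<in> borel_measurable (borel \<Otimes>\<^sub>M D)"
        by measurable
      then show ?thesis unfolding H_def using Fmeas by measurable
    qed
    define I1 where "I1 = PiM {1..k} (\<lambda>_. D)"
    define I2 where "I2 = PiM {Suc k} (\<lambda>_. D)"
    define Y1 where "Y1 \<omega> = restrict (\<lambda>i. X i \<omega>) {1..k}" for \<omega>
    define Y2 where "Y2 \<omega> = restrict (\<lambda>i. X i \<omega>) {Suc k}" for \<omega>
    have ind: "M.indep_var I1 Y1 I2 Y2"
      unfolding I1_def I2_def Y1_def[abs_def] Y2_def[abs_def]
      by (rule M.indep_var_restrict[OF X_indep]) auto
    have Y1m: "Y1 \<in> measurable M I1" unfolding Y1_def[abs_def] I1_def by (rule restr)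
    have Y2m: "Y2 \<in> measurable M I2" unfolding Y2_def[abs_def] I2_def
      by (rule measurable_restrict) (use Xmeas in auto)
    define Q1 where "Q1 = distr M I1 Y1"
    define Q2 where "Q2 = distr M I2 Y2"
    interpret Q2: prob_space Q2 unfolding Q2_def by (rule M.prob_space_distr[OF Y2m])
    have dist: "distr M (I1 \<Otimes>\<^sub>M I2) (\<lambda>\<omega>. (Y1 \<omega>, Y2 \<omega>)) = Q1 \<Otimes>\<^sub>M Q2"
      using ind unfolding M.indep_var_distribution_eq Q1_def Q2_def by simp
    have sgdm1: "sgd theta0 Mk fdot k \<in> borel_measurable I1" unfolding I1_def by (rule sgdm)
    have comp2: "(\<lambda>z. z (Suc k)) \<in> measurable I2 D" unfolding I2_def
      by (rule measurable_component_singleton) simp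
    define H2 where "H2 p = H (sgd theta0 Mk fdot k (fst p), snd p (Suc k))" for p
    have H2m: "H2 \<in> borel_measurable (I1 \<Otimes>\<^sub>M I2)"
    proof -
      have "(\<lambda>p. (sgd theta0 Mk fdot k (fst p), snd p (Suc k))) \<in> measurable (I1 \<Otimes>\<^sub>M I2) (borel \<Otimes>\<^sub>M D)"
        by (intro measurable_Pair measurable_compose[OF measurable_fst sgdm1] measurable_compose[OF measurable_snd comp2])
      from measurable_compose[OF this Hm] show ?thesis unfolding H2_def by simp
    qed
    have pm: "(\<lambda>\<omega>. (Y1 \<omega>, Y2 \<omega>)) \<in> measurable M (I1 \<Otimes>\<^sub>M I2)"
      by (intro measurable_Pair Y1m Y2m)
    have XS: "X (Suc k) \<in> measurable M D" by (rule Xmeas) simp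
    have eq: "theta (Suc k) \<omega> = sgd theta0 Mk fdot k (Y1 \<omega>) - Mk k *v fdot (sgd theta0 Mk fdot k (Y1 \<omega>)) (Y2 \<omega> (Suc k))" for \<omega>
      unfolding theta_Suc theta_eq'[of k \<omega>] Y1_def Y2_def by simp
    have "EG (Suc k) = (\<integral>\<^sup>+\<omega>. H2 (Y1 \<omega>, Y2 \<omega>) \<partial>M)"
      unfolding EG_def G_def H_def H2_def eq by simp
    also have "\<dots> = integral\<^sup>N (distr M (I1 \<Otimes>\<^sub>M I2) (\<lambda>\<omega>. (Y1 \<omega>, Y2 \<omega>))) H2"
      using H2m pm by (intro nn_integral_distr[symmetric]) auto
    also have "\<dots> = integral\<^sup>N (Q1 \<Otimes>\<^sub>M Q2) H2" unfolding dist ..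
    also have "\<dots> = (\<integral>\<^sup>+y1. \<integral>\<^sup>+y2. H2 (y1, y2) \<partial>Q2 \<partial>Q1)"
    proof -
      have "H2 \<in> borel_measurable (Q1 \<Otimes>\<^sub>M Q2)"
        using H2m by (simp add: Q1_def Q2_def)
      then show ?thesis by (rule Q2.nn_integral_fst[symmetric])
    qed
    also have "\<dots> \<le> (\<integral>\<^sup>+y1. ennreal ((F (sgd theta0 Mk fdot k y1) - Flb) + c k * (1 + (F (sgd theta0 Mk fdot k y1) - Flb))) \<partial>Q1)"
    proof (rule nn_integral_mono)
      fix y1
      define \<theta> where "\<theta> = sgd theta0 Mk fdot k y1"
      have Hth: "(\<lambda>x. H (\<theta>, x)) \<in> borel_measurable D"
        using measurable_Pair2[OF Hm, of \<theta>] by simp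
      have "(\<integral>\<^sup>+y2. H2 (y1, y2) \<partial>Q2) = (\<integral>\<^sup>+\<omega>. H (\<theta>, Y2 \<omega> (Suc k)) \<partial>M)"
        unfolding Q2_def H2_def \<theta>_def
        using measurable_compose[OF comp2 Hth] Y2m by (subst nn_integral_distr) (auto simp: \<theta>_def)
      also have "\<dots> = (\<integral>\<^sup>+\<omega>. H (\<theta>, X (Suc k) \<omega>) \<partial>M)" by (simp add: Y2_def)
      also have "\<dots> = (\<integral>\<^sup>+x. H (\<theta>, x) \<partial>(distr M D (X (Suc k))))"
        using Hth XS by (subst nn_integral_distr) auto
      also have "\<dots> = (\<integral>\<^sup>+x. H (\<theta>, x) \<partial>D)" using X_distr[of "Suc k"] by simp
      also have "\<dots> = (\<integral>\<^sup>+x. ennreal (F (\<theta> - Mk k *v fdot \<theta> x) - Flb) \<partial>D)"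
        unfolding H_def by simp
      also have "\<dots> \<le> ennreal ((F \<theta> - Flb) + c k * (1 + (F \<theta> - Flb)))"
        using step_bound[OF D_prob fdot_meas F_diff P1_sym P1_pd alpha A1 A2 C_nonneg A3b L_pos A4b, of \<theta> k]
        unfolding c_def Kc_def by (simp add: mult.assoc)
      finally show "(\<integral>\<^sup>+y2. H2 (y1, y2) \<partial>Q2) \<le> ennreal ((F (sgd theta0 Mk fdot k y1) - Flb) + c k * (1 + (F (sgd theta0 Mk fdot k y1) - Flb)))"
        unfolding \<theta>_def .
    qed
    also have "\<dots> = (\<integral>\<^sup>+\<omega>. ennreal ((F (sgd theta0 Mk fdot k (Y1 \<omega>)) - Flb) + c k * (1 + (F (sgd theta0 Mk fdot k (Y1 \<omega>)) - Flb))) \<partial>M)"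
      unfolding Q1_def using Y1m sgdm1 by (intro nn_integral_distr) auto
    also have "\<dots> = (\<integral>\<^sup>+\<omega>. ennreal (G k \<omega> + c k * (1 + G k \<omega>)) \<partial>M)"
      unfolding G_def by (simp add: theta_eq' Y1_def)
    also have "\<dots> = (\<integral>\<^sup>+\<omega>. (1 + ennreal (c k)) * ennreal (G k \<omega>) + ennreal (c k) \<partial>M)"
    proof (rule nn_integral_cong)
      fix \<omega>
      have "G k \<omega> + c k * (1 + G k \<omega>) = (1 + c k) * G k \<omega> + c k" by (simp add: algebra_simps)
      then show "ennreal (G k \<omega> + c k * (1 + G k \<omega>)) = (1 + ennreal (c k)) * ennreal (G k \<omega>) + ennreal (c k)"
        using c0[of k] G0[of k \<omega>] by (simp add: ennreal_plus ennreal_mult)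
    qed
    also have "\<dots> = (1 + ennreal (c k)) * EG k + ennreal (c k)"
      unfolding EG_def by (simp add: nn_integral_add nn_integral_cmult M.emeasure_space_1)
    finally show ?thesis .
  qed
  have csum: "summable c"
  proof -
    have "summable (\<lambda>k. lambda_max (Mk k) powr (1 + \<alpha>))"
      using P2 by (subst summable_Suc_iff[symmetric])
    then show ?thesis unfolding c_def by (rule summable_mult)
  qed
  define S where "S = suminf c"
  define Bd where "Bd = (G 0 undefined + 1) * exp S"
  have G0const: "G 0 \<omega> = F theta0 - Flb" for \<omega> unfolding G_def by (simp add: theta_0)
  have bound: "EG k + 1 \<le> ennreal ((F theta0 - Flb + 1) * exp (\<Sum>j<k. c j))" for k
  proof (induction k)
    case 0
    have "EG 0 = ennreal (F theta0 - Flb)"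
      unfolding EG_def G0const by (simp add: M.emeasure_space_1)
    then show ?case using A1[of theta0] by (simp add: ennreal_plus[symmetric])
  next
    case (Suc k)
    have "EG (Suc k) + 1 \<le> (1 + ennreal (c k)) * EG k + ennreal (c k) + 1"
      using step[of k] by (simp add: add_right_mono)
    also have "\<dots> = (1 + ennreal (c k)) * (EG k + 1)" by (simp add: algebra_simps)
    also have "\<dots> \<le> ennreal (1 + c k) * ennreal ((F theta0 - Flb + 1) * exp (\<Sum>j<k. c j))"
      using Suc.IH c0[of k] by (simp add: ennreal_plus mult_left_mono)
    also have "\<dots> = ennreal ((1 + c k) * ((F theta0 - Flb + 1) * exp (\<Sum>j<k. c j)))"
      using c0[of k] A1[of theta0] by (subst ennreal_mult) auto
    also have "\<dots> \<le> ennreal ((F theta0 - Flb + 1) * exp (\<Sum>j<Suc k. c j))"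
    proof (rule ennreal_leI)
      have e: "1 + c k \<le> exp (c k)" by (rule exp_ge_add_one_self_aux) (use c0 in simp)
      have p: "0 \<le> (F theta0 - Flb + 1) * exp (\<Sum>j<k. c j)" using A1[of theta0] by simp
      have "(1 + c k) * ((F theta0 - Flb + 1) * exp (\<Sum>j<k. c j)) \<le> exp (c k) * ((F theta0 - Flb + 1) * exp (\<Sum>j<k. c j))"
        using e p by (rule mult_right_mono)
      also have "\<dots> = (F theta0 - Flb + 1) * exp (\<Sum>j<Suc k. c j)"
        by (simp add: exp_add[symmetric] algebra_simps)
      finally show "(1 + c k) * ((F theta0 - Flb + 1) * exp (\<Sum>j<k. c j)) \<le> (F theta0 - Flb + 1) * exp (\<Sum>j<Suc k. c j)" .
    qed
    finally show ?case .
  qed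
  define B where "B = (F theta0 - Flb + 1) * exp S"
  have B0: "B \<ge> 0" unfolding B_def using A1[of theta0] by simp
  have EGB: "EG k \<le> ennreal B" for k
  proof -
    have "(\<Sum>j<k. c j) \<le> S" unfolding S_def using csum c0 by (intro sum_le_suminf) auto
    then have "(F theta0 - Flb + 1) * exp (\<Sum>j<k. c j) \<le> B"
      unfolding B_def using A1[of theta0] by (intro mult_left_mono) auto
    then have "EG k + 1 \<le> ennreal B" using bound[of k] by (meson ennreal_leI order_trans)
    then show ?thesis by (meson add_increasing2 order_trans zero_le_one order_refl le_iff_add)
  qed
  have Gint: "integrable M (G k)" for k
    by (rule integrableI_nonneg) (use EGB[of k] G0 in \<open>auto simp: EG_def le_less_trans\<close>)
  have GB: "(\<integral>\<omega>. G k \<omega> \<partial>M) \<le> B" for k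
  proof -
    have "ennreal (\<integral>\<omega>. G k \<omega> \<partial>M) = EG k"
      unfolding EG_def using Gint G0 by (intro nn_integral_eq_integral[symmetric]) auto
    then have "ennreal (\<integral>\<omega>. G k \<omega> \<partial>M) \<le> ennreal B" using EGB[of k] by simp
    then show ?thesis using B0 ennreal_le_iff by blast
  qed
  have Feq: "(\<lambda>\<omega>. F (theta k \<omega>)) = (\<lambda>\<omega>. G k \<omega> + Flb)" for k unfolding G_def by auto
  have Fint: "integrable M (\<lambda>\<omega>. F (theta k \<omega>))" for k
    unfolding Feq using Gint[of k] by simp
  have Fbdd: "bdd_above (range (\<lambda>k. \<integral>\<omega>. F (theta k \<omega>) \<partial>M))"
  proof (rule bdd_aboveI2)
    fix k
    have "(\<integral>\<omega>. F (theta k \<omega>) \<partial>M) = (\<integral>\<omega>. G k \<omega> \<partial>M) + Flb"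
      unfolding Feq using Gint[of k] by (simp add: M.prob_space)
    then show "(\<integral>\<omega>. F (theta k \<omega>) \<partial>M) \<le> B + Flb" using GB[of k] by simp
  qed
  have conv: "(\<lambda>k. \<integral>\<^sup>+\<omega>. ennreal \<bar>rpow (F (theta k \<omega>) - Flb) \<gamma> - rpow (Flim \<omega> - Flb) \<gamma>\<bar> \<partial>M) \<longlonglongrightarrow> 0"
    if g: "0 \<le> \<gamma>" "\<gamma> < 1" for \<gamma> :: real
  proof (cases "\<gamma> = 0")
    case True
    then show ?thesis by (simp add: rpow_def)
  next
    case False
    then have g0: "0 < \<gamma>" using g by simp
    have Zm: "(\<lambda>\<omega>. Flim \<omega> - Flb) \<in> borel_measurable M" using Flim_meas by measurable
    have lim: "AE \<omega> in M. (\<lambda>k. G k \<omega>) \<longlonglongrightarrow> Flim \<omega> - Flb"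
      using Flim_lim by eventually_elim (unfold G_def, intro tendsto_intros)
    have "(\<lambda>k. \<integral>\<^sup>+\<omega>. ennreal \<bar>G k \<omega> powr \<gamma> - (Flim \<omega> - Flb) powr \<gamma>\<bar> \<partial>M) \<longlonglongrightarrow> 0"
      by (rule L1_conv[OF M_prob Gm Zm G0 lim Gint GB g0 g(2)])
    then show ?thesis using False unfolding rpow_def G_def by simp
  qed
  show ?thesis using Fint Fbdd conv by blast
qed

end
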